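(* Let $G$ be a connected graph. If $G_{\rm SR}\cong K_1+(aK_2\cup bK_1)$ where either $a\ge 1$ and $b\ge 0$, or $a=0$ and $b\ge 2$, then $O_{\rm SR}(G)=\mathcal{N}$.
   Context: All graphs are finite, simple and undirected; $d(x,y)$ is the shortest-path distance. $aK_2\cup bK_1$ is the disjoint union of $a$ copies of $K_2$ and $b$ isolated vertices; the join $X+Y$ is obtained from the disjoint union of $X$ and $Y$ by adding all edges between $V(X)$ and $V(Y)$. A set $S\subseteq V(G)$ is a strong resolving set of a connected graph $G$ if for all distinct $x,y\in V(G)$ there exists $z\in S$ such that $x$ lies on a $y$–$z$ geodesic or $y$ lies on an $x$–$z$ geodesic. A vertex $u$ is maximally distant from $v$ if $d(u,v)\ge d(w,v)$ for every neighbor $w$ of $u$; $u,v$ are mutually maximally distant (MMD) if each is maximally distant from the other. The strong resolving graph $G_{\rm SR}$ has vertex set $\{x: x\text{ is MMD with some }y\}$ and edges exactly the MMD pairs. The Maker–Breaker strong resolving game on $G$: Maker and Breaker alternately select a not-yet-chosen vertex of $G$; Maker wins if the vertices he selects contain a strong resolving set of $G$, Breaker wins otherwise. In the M-game Maker moves first, in the B-game Breaker moves first. $O_{\rm SR}(G)=\mathcal{M}$ if Maker has a winning strategy in both games, $\mathcal{B}$ if Breaker has a winning strategy in both, and $\mathcal{N}$ if the first player has a winning strategy in each. *)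

theory Defs
  imports Main
begin

definition simple_graph :: "'a set \<Rightarrow> ('a \<Rightarrow> 'a \<Rightarrow> bool) \<Rightarrow> bool" where
  "simple_graph V E \<longleftrightarrow> finite V \<and> (\<forall>x y. E x y \<longrightarrow> x \<in> V \<and> y \<in> V)
     \<and> (\<forall>x y. E x y \<longrightarrow> E y x) \<and> (\<forall>x. \<not> E x x)"

fun is_walk :: "('a \<Rightarrow> 'a \<Rightarrow> bool) \<Rightarrow> 'a list \<Rightarrow> bool" where
  "is_walk E [] = False"
| "is_walk E [x] = True"
| "is_walk E (x # y # xs) = (E x y \<and> is_walk E (y # xs))"

definition walk_between :: "'a set \<Rightarrow> ('a \<Rightarrow> 'a \<Rightarrow> bool) \<Rightarrow> 'a \<Rightarrow> 'a \<Rightarrow> 'a list \<Rightarrow> bool" where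
  "walk_between V E x y xs \<longleftrightarrow> is_walk E xs \<and> set xs \<subseteq> V \<and> hd xs = x \<and> last xs = y"

definition connected_graph :: "'a set \<Rightarrow> ('a \<Rightarrow> 'a \<Rightarrow> bool) \<Rightarrow> bool" where
  "connected_graph V E \<longleftrightarrow> simple_graph V E \<and> V \<noteq> {}
     \<and> (\<forall>x\<in>V. \<forall>y\<in>V. \<exists>xs. walk_between V E x y xs)"

definition gdist :: "'a set \<Rightarrow> ('a \<Rightarrow> 'a \<Rightarrow> bool) \<Rightarrow> 'a \<Rightarrow> 'a \<Rightarrow> nat" where
  "gdist V E x y = (LEAST n. \<exists>xs. walk_between V E x y xs \<and> length xs = Suc n)"

definition on_geodesic :: "'a set \<Rightarrow> ('a \<Rightarrow> 'a \<Rightarrow> bool) \<Rightarrow> 'a \<Rightarrow> 'a \<Rightarrow> 'a \<Rightarrow> bool" where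
  "on_geodesic V E x y z \<longleftrightarrow> gdist V E y x + gdist V E x z = gdist V E y z"

definition strong_resolving_set :: "'a set \<Rightarrow> ('a \<Rightarrow> 'a \<Rightarrow> bool) \<Rightarrow> 'a set \<Rightarrow> bool" where
  "strong_resolving_set V E S \<longleftrightarrow> S \<subseteq> V \<and>
     (\<forall>x\<in>V. \<forall>y\<in>V. x \<noteq> y \<longrightarrow>
        (\<exists>z\<in>S. on_geodesic V E x y z \<or> on_geodesic V E y x z))"

definition maximally_distant :: "'a set \<Rightarrow> ('a \<Rightarrow> 'a \<Rightarrow> bool) \<Rightarrow> 'a \<Rightarrow> 'a \<Rightarrow> bool" where
  "maximally_distant V E u v \<longleftrightarrow> (\<forall>w. E u w \<longrightarrow> gdist V E w v \<le> gdist V E u v)"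

definition MMD :: "'a set \<Rightarrow> ('a \<Rightarrow> 'a \<Rightarrow> bool) \<Rightarrow> 'a \<Rightarrow> 'a \<Rightarrow> bool" where
  "MMD V E u v \<longleftrightarrow> u \<in> V \<and> v \<in> V \<and> u \<noteq> v \<and>
     maximally_distant V E u v \<and> maximally_distant V E v u"

definition SR_verts :: "'a set \<Rightarrow> ('a \<Rightarrow> 'a \<Rightarrow> bool) \<Rightarrow> 'a set" where
  "SR_verts V E = {x. \<exists>y. MMD V E x y}"

definition SR_edge :: "'a set \<Rightarrow> ('a \<Rightarrow> 'a \<Rightarrow> bool) \<Rightarrow> 'a \<Rightarrow> 'a \<Rightarrow> bool" where
  "SR_edge V E = MMD V E"

definition graph_iso :: "'a set \<Rightarrow> ('a \<Rightarrow> 'a \<Rightarrow> bool) \<Rightarrow> 'b set \<Rightarrow> ('b \<Rightarrow> 'b \<Rightarrow> bool) \<Rightarrow> bool" where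
  "graph_iso V E W F \<longleftrightarrow> (\<exists>f. bij_betw f V W \<and> (\<forall>x\<in>V. \<forall>y\<in>V. E x y \<longleftrightarrow> F (f x) (f y)))"

definition dunion_V :: "'a set \<Rightarrow> 'b set \<Rightarrow> ('a + 'b) set" where
  "dunion_V V W = Inl ` V \<union> Inr ` W"

fun dunion_E :: "('a \<Rightarrow> 'a \<Rightarrow> bool) \<Rightarrow> ('b \<Rightarrow> 'b \<Rightarrow> bool) \<Rightarrow> ('a + 'b) \<Rightarrow> ('a + 'b) \<Rightarrow> bool" where
  "dunion_E E F (Inl x) (Inl y) = E x y"
| "dunion_E E F (Inr x) (Inr y) = F x y"
| "dunion_E E F _ _ = False"

fun join_E :: "'a set \<Rightarrow> ('a \<Rightarrow> 'a \<Rightarrow> bool) \<Rightarrow> 'b set \<Rightarrow> ('b \<Rightarrow> 'b \<Rightarrow> bool) \<Rightarrow> ('a + 'b) \<Rightarrow> ('a + 'b) \<Rightarrow> bool" where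
  "join_E V E W F (Inl x) (Inl y) = E x y"
| "join_E V E W F (Inr x) (Inr y) = F x y"
| "join_E V E W F (Inl x) (Inr y) = (x \<in> V \<and> y \<in> W)"
| "join_E V E W F (Inr x) (Inl y) = (x \<in> W \<and> y \<in> V)"

text \<open>a K_2 \<union> b K_1: vertices (i,j) with i<a, j::bool forming the copies of K_2,
  and k<b isolated.\<close>
definition aK2_bK1_V :: "nat \<Rightarrow> nat \<Rightarrow> ((nat \<times> bool) + nat) set" where
  "aK2_bK1_V a b = dunion_V ({..<a} \<times> UNIV) {..<b}"

definition aK2_bK1_E :: "((nat \<times> bool) + nat) \<Rightarrow> ((nat \<times> bool) + nat) \<Rightarrow> bool" where
  "aK2_bK1_E = dunion_E (\<lambda>(i,j) (i',j'). i = i' \<and> j \<noteq> j') (\<lambda>_ _. False)"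

definition target_V :: "nat \<Rightarrow> nat \<Rightarrow> (unit + ((nat \<times> bool) + nat)) set" where
  "target_V a b = dunion_V {()} (aK2_bK1_V a b)"

definition target_E :: "nat \<Rightarrow> nat \<Rightarrow> (unit + ((nat \<times> bool) + nat)) \<Rightarrow> (unit + ((nat \<times> bool) + nat)) \<Rightarrow> bool" where
  "target_E a b = join_E {()} (\<lambda>_ _. False) (aK2_bK1_V a b) aK2_bK1_E"

text \<open>State: Maker's set M, Breaker's set B,
  and n = number of not-yet-chosen vertices. The game ends when all vertices are
  chosen; Maker wins iff his vertices contain a strong resolving set.
  maker_wins ... n M B True: Maker to move, and Maker has a winning strategy.\<close>
fun maker_wins :: "'a set \<Rightarrow> ('a \<Rightarrow> 'a \<Rightarrow> bool) \<Rightarrow> nat \<Rightarrow> 'a set \<Rightarrow> 'a set \<Rightarrow> bool \<Rightarrow> bool" where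
  "maker_wins V E 0 M B t = (\<exists>S\<subseteq>M. strong_resolving_set V E S)"
| "maker_wins V E (Suc n) M B True =
     (\<exists>v\<in>V - (M \<union> B). maker_wins V E n (insert v M) B False)"
| "maker_wins V E (Suc n) M B False =
     (\<forall>v\<in>V - (M \<union> B). maker_wins V E n M (insert v B) True)"

definition maker_wins_M_game :: "'a set \<Rightarrow> ('a \<Rightarrow> 'a \<Rightarrow> bool) \<Rightarrow> bool" where
  "maker_wins_M_game V E = maker_wins V E (card V) {} {} True"

definition maker_wins_B_game :: "'a set \<Rightarrow> ('a \<Rightarrow> 'a \<Rightarrow> bool) \<Rightarrow> bool" where
  "maker_wins_B_game V E = maker_wins V E (card V) {} {} False"

text \<open>Finite games of perfect information are determined: Breaker has a winning
  strategy iff Maker does not.\<close>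
definition breaker_wins_M_game :: "'a set \<Rightarrow> ('a \<Rightarrow> 'a \<Rightarrow> bool) \<Rightarrow> bool" where
  "breaker_wins_M_game V E = (\<not> maker_wins_M_game V E)"

definition breaker_wins_B_game :: "'a set \<Rightarrow> ('a \<Rightarrow> 'a \<Rightarrow> bool) \<Rightarrow> bool" where
  "breaker_wins_B_game V E = (\<not> maker_wins_B_game V E)"

datatype outcome = Out_M | Out_B | Out_N | Out_P

definition O_SR :: "'a set \<Rightarrow> ('a \<Rightarrow> 'a \<Rightarrow> bool) \<Rightarrow> outcome" where
  "O_SR V E =
    (if maker_wins_M_game V E \<and> maker_wins_B_game V E then Out_M
     else if breaker_wins_M_game V E \<and> breaker_wins_B_game V E then Out_B
     else if maker_wins_M_game V E \<and> breaker_wins_B_game V E then Out_N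
     else Out_P)"

end

theory Submission
  imports Defs
begin

lemma walk_nonempty: "is_walk E xs \<Longrightarrow> xs \<noteq> []" by (cases xs) auto

lemma walk_append: "is_walk E xs \<Longrightarrow> is_walk E ys \<Longrightarrow> last xs = hd ys \<Longrightarrow> is_walk E (xs @ tl ys)"
proof (induction E xs rule: is_walk.induct)
  case (1 E) then show ?case by simp
next
  case (2 E x) then show ?case by (cases ys) auto
next
  case (3 E x y xs) then show ?case by auto
qed

lemma walk_rev: "is_walk E xs \<Longrightarrow> (\<And>x y. E x y \<Longrightarrow> E y x) \<Longrightarrow> is_walk E (rev xs)"
proof (induction E xs rule: is_walk.induct)
  case (1 E) then show ?case by simp
next
  case (2 E x) then show ?case by simp
next
  case (3 E x y xs)
  have a: "is_walk E (rev (y # xs))" using 3 by auto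
  have b: "is_walk E [y, x]" using 3 by auto
  have "is_walk E (rev (y # xs) @ tl [y, x])"
    by (rule walk_append[OF a b]) simp
  then show ?case by simp
qed

context
  fixes V :: "'a set" and E
  assumes conn: "connected_graph V E"
begin

lemma finV: "finite V" using conn unfolding connected_graph_def simple_graph_def by blast
lemma Ein: "E x y \<Longrightarrow> x \<in> V \<and> y \<in> V" using conn unfolding connected_graph_def simple_graph_def by blast
lemma Esym: "E x y \<Longrightarrow> E y x" using conn unfolding connected_graph_def simple_graph_def by blast

lemma dist_walk: assumes "x \<in> V" "y \<in> V"
  shows "\<exists>xs. walk_between V E x y xs \<and> length xs = Suc (gdist V E x y)"
proof -
  obtain xs where w: "walk_between V E x y xs" using conn assms unfolding connected_graph_def by blast
  then have "xs \<noteq> []" using walk_nonempty unfolding walk_between_def by blast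
  then have "\<exists>n xs. walk_between V E x y xs \<and> length xs = Suc n" using w
    by (intro exI[of _ "length xs - 1"] exI[of _ xs]) auto
  then show ?thesis unfolding gdist_def by (rule LeastI_ex)
qed

lemma dist_le: assumes "walk_between V E x y xs" shows "gdist V E x y \<le> length xs - 1"
proof -
  have "xs \<noteq> []" using assms walk_nonempty unfolding walk_between_def by blast
  then have "walk_between V E x y xs \<and> length xs = Suc (length xs - 1)" using assms by auto
  then show ?thesis unfolding gdist_def by (intro Least_le) blast
qed

lemma tri: assumes "x \<in> V" "y \<in> V" "z \<in> V"
  shows "gdist V E x z \<le> gdist V E x y + gdist V E y z"
proof -
  obtain xs where xs: "walk_between V E x y xs" "length xs = Suc (gdist V E x y)"
    using dist_walk assms by blast
  obtain ys where ys: "walk_between V E y z ys" "length ys = Suc (gdist V E y z)"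
    using dist_walk assms by blast
  have ne: "xs \<noteq> []" "ys \<noteq> []" using xs ys by auto
  have "walk_between V E x z (xs @ tl ys)"
    unfolding walk_between_def
  proof (intro conjI)
    show "is_walk E (xs @ tl ys)" using xs ys walk_append unfolding walk_between_def by metis
    show "set (xs @ tl ys) \<subseteq> V" using xs ys ne unfolding walk_between_def
      by (cases ys) auto
    show "hd (xs @ tl ys) = x" using xs ne unfolding walk_between_def by simp
    show "last (xs @ tl ys) = z" using xs ys ne unfolding walk_between_def
      by (cases ys; cases "tl ys") auto
  qed
  from dist_le[OF this] show ?thesis using xs ys ne by (cases ys) auto
qed

lemma dsym: assumes "x \<in> V" "y \<in> V" shows "gdist V E x y = gdist V E y x"
proof -
  have "gdist V E x y \<le> gdist V E y x" if h: "x \<in> V" "y \<in> V" for x y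
  proof -
    obtain xs where xs: "walk_between V E y x xs" "length xs = Suc (gdist V E y x)"
      using dist_walk h by blast
    have ne: "xs \<noteq> []" using xs by auto
    have "walk_between V E x y (rev xs)" using xs ne walk_rev[of E xs] Esym
      unfolding walk_between_def by (auto simp: hd_rev last_rev)
    from dist_le[OF this] show ?thesis using xs by simp
  qed
  then show ?thesis using assms by (meson le_antisym)
qed

lemma d0: "x \<in> V \<Longrightarrow> gdist V E x x = 0"
  using dist_le[of x x "[x]"] unfolding walk_between_def by auto

lemma d0_eq: assumes "x \<in> V" "y \<in> V" "gdist V E x y = 0" shows "x = y"
proof -
  obtain xs where xs: "walk_between V E x y xs" "length xs = Suc 0"
    using dist_walk assms by fastforce
  then obtain z where "xs = [z]" by (cases xs) auto
  then show ?thesis using xs unfolding walk_between_def by auto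
qed

lemma d1: "E x y \<Longrightarrow> gdist V E x y \<le> 1"
  using dist_le[of x y "[x,y]"] Ein unfolding walk_between_def by auto

lemma dstep: assumes "x \<in> V" "y \<in> V" "x \<noteq> y"
  shows "\<exists>w. E x w \<and> gdist V E w y + 1 = gdist V E x y"
proof -
  obtain xs where xs: "walk_between V E x y xs" "length xs = Suc (gdist V E x y)"
    using dist_walk assms by blast
  then obtain rest where r: "xs = x # rest" unfolding walk_between_def by (cases xs) auto
  have "rest \<noteq> []" using r xs assms unfolding walk_between_def by auto
  then obtain w rest' where r2: "rest = w # rest'" by (cases rest) auto
  have Exw: "E x w" using xs r r2 unfolding walk_between_def by simp
  have "walk_between V E w y (w # rest')" using xs r r2 unfolding walk_between_def by simp
  from dist_le[OF this] have "gdist V E w y \<le> gdist V E x y - 1" using xs r r2 by simp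
  moreover have "gdist V E x y \<le> gdist V E x w + gdist V E w y"
    using tri assms Ein[OF Exw] by blast
  moreover have "gdist V E x w \<le> 1" using d1 Exw by blast
  moreover have "gdist V E x y \<noteq> 0" using d0_eq assms by blast
  ultimately show ?thesis using Exw by (intro exI[of _ w]) auto
qed

lemma geo_end: assumes m: "MMD V E u v" and z: "z \<in> V"
  and g: "gdist V E v u + gdist V E u z = gdist V E v z" shows "z = u"
proof (rule ccontr)
  assume "z \<noteq> u"
  have uv: "u \<in> V" "v \<in> V" using m unfolding MMD_def by auto
  obtain w where w: "E u w" "gdist V E w z + 1 = gdist V E u z" using dstep uv z \<open>z \<noteq> u\<close> by metis
  have wV: "w \<in> V" using Ein w by blast
  have "gdist V E w v \<le> gdist V E u v" using m w unfolding MMD_def maximally_distant_def by blast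
  moreover have "gdist V E v z \<le> gdist V E v w + gdist V E w z" using tri uv z wV by blast
  moreover have "gdist V E v w = gdist V E w v" "gdist V E v u = gdist V E u v" using dsym uv wV by auto
  ultimately show False using g w by linarith
qed

lemma srs_cover: assumes "strong_resolving_set V E S" "MMD V E u v" shows "u \<in> S \<or> v \<in> S"
proof -
  have uv: "u \<in> V" "v \<in> V" "u \<noteq> v" using assms unfolding MMD_def by auto
  have m2: "MMD V E v u" using assms(2) unfolding MMD_def by auto
  obtain z where z: "z \<in> S" "on_geodesic V E u v z \<or> on_geodesic V E v u z"
    using assms uv unfolding strong_resolving_set_def by blast
  have zV: "z \<in> V" using z assms unfolding strong_resolving_set_def by blast
  show ?thesis using z geo_end[OF assms(2) zV] geo_end[OF m2 zV] unfolding on_geodesic_def by auto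
qed

lemma ext: assumes p: "p \<in> V" and q: "q \<in> V"
  shows "\<exists>u\<in>V. gdist V E p q + gdist V E q u = gdist V E p u \<and>
     (\<forall>w. E u w \<longrightarrow> gdist V E w p \<le> gdist V E u p)"
proof -
  define A where "A = {u\<in>V. gdist V E p q + gdist V E q u = gdist V E p u}"
  have fA: "finite A" using finV unfolding A_def by auto
  have qA: "q \<in> A" using q d0 unfolding A_def by auto
  define m where "m = Max ((\<lambda>u. gdist V E p u) ` A)"
  have "m \<in> (\<lambda>u. gdist V E p u) ` A" unfolding m_def using fA qA by (intro Max_in) auto
  then obtain u where uA: "u \<in> A" and um: "gdist V E p u = m" by auto
  have mx: "gdist V E p u' \<le> gdist V E p u" if "u' \<in> A" for u'
    using um unfolding m_def using fA that by auto
  have uV: "u \<in> V" using uA unfolding A_def by auto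
  have "gdist V E w p \<le> gdist V E u p" if Euw: "E u w" for w
  proof (rule ccontr)
    assume c: "\<not> ?thesis"
    have wV: "w \<in> V" using Ein Euw by blast
    have s: "gdist V E p w = gdist V E w p" "gdist V E p u = gdist V E u p" using dsym p wV uV by auto
    have "gdist V E p w \<le> gdist V E p u + gdist V E u w" using tri p uV wV by blast
    moreover have "gdist V E q w \<le> gdist V E q u + gdist V E u w" using tri q uV wV by blast
    moreover have "gdist V E p w \<le> gdist V E p q + gdist V E q w" using tri p q wV by blast
    moreover have "gdist V E u w \<le> 1" using d1 Euw by blast
    moreover have "gdist V E p q + gdist V E q u = gdist V E p u" using uA unfolding A_def by auto
    ultimately have "w \<in> A" using c s wV unfolding A_def by auto
    then show False using mx c s by fastforce
  qed
  then show ?thesis using uA uV unfolding A_def by blast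
qed

lemma cover_srs: assumes SV: "S \<subseteq> V" and cov: "\<forall>u v. MMD V E u v \<longrightarrow> u \<in> S \<or> v \<in> S"
  shows "strong_resolving_set V E S"
  unfolding strong_resolving_set_def
proof (intro conjI SV ballI impI)
  fix x y assume x: "x \<in> V" and y: "y \<in> V" and xy: "x \<noteq> y"
  obtain u where u: "u \<in> V" "gdist V E y x + gdist V E x u = gdist V E y u"
     "\<forall>w. E u w \<longrightarrow> gdist V E w y \<le> gdist V E u y" using ext[OF y x] by blast
  obtain v where v: "v \<in> V" "gdist V E u y + gdist V E y v = gdist V E u v"
     "\<forall>w. E v w \<longrightarrow> gdist V E w u \<le> gdist V E v u" using ext[OF u(1) y] by blast
  have md1: "maximally_distant V E u v" unfolding maximally_distant_def
  proof (intro allI impI)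
    fix w assume Euw: "E u w"
    have wV: "w \<in> V" using Ein Euw by blast
    have "gdist V E w v \<le> gdist V E w y + gdist V E y v" using tri wV y v(1) by blast
    then show "gdist V E w v \<le> gdist V E u v" using u(3) Euw v(2) by fastforce
  qed
  have md2: "maximally_distant V E v u" using v(3) unfolding maximally_distant_def by blast
  have "u \<noteq> v"
  proof
    assume "u = v"
    then have "gdist V E u y = 0" using v(2) d0 u(1) by simp
    then have "u = y" using d0_eq u(1) y by blast
    then have "gdist V E y x = 0" using u(2) d0 y by simp
    then show False using d0_eq x y xy by metis
  qed
  then have "MMD V E u v" using md1 md2 u(1) v(1) unfolding MMD_def by blast
  then have "u \<in> S \<or> v \<in> S" using cov by blast
  then show "\<exists>z\<in>S. on_geodesic V E x y z \<or> on_geodesic V E y x z"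
  proof
    assume "u \<in> S" then show ?thesis using u(2) unfolding on_geodesic_def by blast
  next
    assume vS: "v \<in> S"
    have "gdist V E x v \<le> gdist V E x y + gdist V E y v" using tri x y v(1) by blast
    moreover have "gdist V E u v \<le> gdist V E u x + gdist V E x v" using tri x u(1) v(1) by blast
    moreover have "gdist V E u y = gdist V E y u" "gdist V E u x = gdist V E x u"
      "gdist V E x y = gdist V E y x" using dsym x y u(1) by auto
    ultimately have "gdist V E x y + gdist V E y v = gdist V E x v" using u(2) v(2) by linarith
    then show ?thesis using vS unfolding on_geodesic_def by blast
  qed
qed

end

definition Inv :: "nat \<Rightarrow> (nat \<Rightarrow> 'a) \<Rightarrow> (nat \<Rightarrow> 'a) \<Rightarrow> 'a set \<Rightarrow> 'a set \<Rightarrow> bool" where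
  "Inv a x y M B \<longleftrightarrow> (\<forall>i<a. x i \<in> M \<or> y i \<in> M \<or> (x i \<notin> M \<union> B \<and> y i \<notin> M \<union> B))"

lemma Inv_mono: "Inv a x y M B \<Longrightarrow> Inv a x y (insert v M) B"
  unfolding Inv_def by auto

lemma card_step: assumes "finite V" "v \<in> V - (M \<union> B)" "card (V - (M \<union> B)) = Suc m"
  shows "card (V - (insert v M \<union> B)) = m" "card (V - (M \<union> insert v B)) = m"
proof -
  have "V - (insert v M \<union> B) = (V - (M \<union> B)) - {v}" "V - (M \<union> insert v B) = (V - (M \<union> B)) - {v}" by auto
  then show "card (V - (insert v M \<union> B)) = m" "card (V - (M \<union> insert v B)) = m"
    using assms by (simp_all add: card_Diff_singleton)
qed

lemma card0_all: assumes "finite V" "card (V - (M \<union> B)) = 0" "z \<in> V" shows "z \<in> M \<union> B"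
  using assms by auto

lemma pair_strategy:
  assumes fin: "finite V"
    and final: "\<And>M. M \<subseteq> V \<Longrightarrow> c \<in> M \<Longrightarrow> (\<forall>i<a. x i \<in> M \<or> y i \<in> M) \<Longrightarrow> \<exists>S\<subseteq>M. strong_resolving_set V E S"
    and xV: "\<forall>i<a. x i \<in> V \<and> y i \<in> V"
    and xy: "\<forall>i<a. x i \<noteq> y i"
    and disj: "\<forall>i<a. \<forall>j<a. i \<noteq> j \<longrightarrow> x i \<noteq> x j \<and> x i \<noteq> y j \<and> y i \<noteq> x j \<and> y i \<noteq> y j"
  shows "card (V - (M \<union> B)) = n \<Longrightarrow> M \<union> B \<subseteq> V \<Longrightarrow> c \<in> M \<Longrightarrow> Inv a x y M B \<Longrightarrow> maker_wins V E n M B False"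
proof (induction n arbitrary: M B rule: less_induct)
  case (less n)
  have fin0: "\<exists>S\<subseteq>M. strong_resolving_set V E S"
    if "card (V - (M \<union> B)) = 0" "M \<union> B \<subseteq> V" "c \<in> M" "Inv a x y M B" for M B
  proof (rule final)
    show "M \<subseteq> V" "c \<in> M" using that by auto
    show "\<forall>i<a. x i \<in> M \<or> y i \<in> M"
    proof (intro allI impI)
      fix i assume "i < a"
      then have "x i \<in> M \<union> B" "y i \<in> M \<union> B" using card0_all[OF fin that(1)] xV by auto
      then show "x i \<in> M \<or> y i \<in> M" using that(4) \<open>i < a\<close> unfolding Inv_def by blast
    qed
  qed
  show ?case
  proof (cases n)
    case 0 then show ?thesis using fin0 less.prems by simp
  next
    case (Suc m)
    have "maker_wins V E m M (insert w B) True" if w: "w \<in> V - (M \<union> B)" for w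
    proof -
      have cm: "card (V - (M \<union> insert w B)) = m" using card_step[OF fin w] less.prems Suc by blast
      have sub: "M \<union> insert w B \<subseteq> V" using less.prems w by auto
      show ?thesis
      proof (cases "\<exists>i<a. (w = x i \<or> w = y i) \<and> x i \<notin> M \<and> y i \<notin> M")
        case True
        then obtain i where i: "i < a" "w = x i \<or> w = y i" "x i \<notin> M" "y i \<notin> M" by blast
        define v where "v = (if w = x i then y i else x i)"
        have free: "x i \<notin> M \<union> B" "y i \<notin> M \<union> B" using less.prems(4) i unfolding Inv_def by auto
        have vf: "v \<in> V - (M \<union> insert w B)" using free xV xy i unfolding v_def by auto
        have inv: "Inv a x y (insert v M) (insert w B)" unfolding Inv_def
        proof (intro allI impI)
          fix j assume j: "j < a"
          show "x j \<in> insert v M \<or> y j \<in> insert v M \<or> (x j \<notin> insert v M \<union> insert w B \<and> y j \<notin> insert v M \<union> insert w B)"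
          proof (cases "j = i")
            case True then show ?thesis unfolding v_def by auto
          next
            case False
            then have "x j \<noteq> w" "y j \<noteq> w" using disj i j by metis+
            then show ?thesis using less.prems(4) j unfolding Inv_def by auto
          qed
        qed
        have "m \<noteq> 0" using vf cm fin by (metis card_0_eq empty_iff finite_Diff)
        then obtain k where k: "m = Suc k" by (cases m) auto
        have ck: "card (V - (insert v M \<union> insert w B)) = k" using card_step(1)[OF fin vf] cm k by blast
        have "maker_wins V E k (insert v M) (insert w B) False"
          using less.IH[of k "insert v M" "insert w B"] Suc k ck inv sub vf less.prems by auto
        then show ?thesis using k vf by auto
      next
        case False
        have inv: "Inv a x y M (insert w B)"
          using False less.prems(4) unfolding Inv_def by auto
        show ?thesis
        proof (cases m)
          case 0 then show ?thesis using fin0[OF _ sub _ inv] cm less.prems by simp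
        next
          case (Suc k)
          then obtain v where vf: "v \<in> V - (M \<union> insert w B)" using cm
            by (metis card.empty ex_in_conv nat.simps(3))
          have ck: "card (V - (insert v M \<union> insert w B)) = k" using card_step(1)[OF fin vf] cm Suc by blast
          have "maker_wins V E k (insert v M) (insert w B) False"
            using less.IH[of k "insert v M" "insert w B"] \<open>n = Suc m\<close> Suc ck Inv_mono[OF inv] sub vf less.prems by auto
          then show ?thesis using Suc vf by auto
        qed
      qed
    qed
    then show ?thesis using Suc by simp
  qed
qed

lemma breaker_blocks:
  assumes fin: "finite V" and blk: "\<forall>S. strong_resolving_set V E S \<longrightarrow> u \<in> S \<or> w \<in> S"
  shows "card (V - (M \<union> B)) = n \<Longrightarrow> u \<in> B \<Longrightarrow> w \<in> B \<Longrightarrow> u \<notin> M \<Longrightarrow> w \<notin> M \<Longrightarrow> \<not> maker_wins V E n M B t"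
proof (induction n arbitrary: M B t)
  case 0 then show ?case using blk by auto
next
  case (Suc m)
  show ?case
  proof (cases t)
    case True
    have "\<not> maker_wins V E m (insert v M) B False" if v: "v \<in> V - (M \<union> B)" for v
      using Suc.IH[of "insert v M" B False] card_step(1)[OF fin v] Suc.prems v by auto
    then show ?thesis using True by auto
  next
    case False
    obtain v where v: "v \<in> V - (M \<union> B)" using Suc.prems(1)
      by (metis card.empty ex_in_conv nat.simps(3))
    have "\<not> maker_wins V E m M (insert v B) True"
      using Suc.IH[of M "insert v B" True] card_step(2)[OF fin v] Suc.prems v by auto
    then show ?thesis using False v by auto
  qed
qed


theorem mainTheorem10:
  fixes V :: "'a set" and E :: "'a \<Rightarrow> 'a \<Rightarrow> bool" and a b :: nat
  assumes "connected_graph V E"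
    and "graph_iso (SR_verts V E) (SR_edge V E) (target_V a b) (target_E a b)"
    and "(a \<ge> 1) \<or> (a = 0 \<and> b \<ge> 2)"
  shows "O_SR V E = Out_N"
proof -
  note conn = assms(1)
  have fin: "finite V" using finV[OF conn] .
  define SR where "SR = SR_verts V E"
  define T where "T = target_V a b"
  have "\<exists>f. bij_betw f SR T \<and> (\<forall>x\<in>SR. \<forall>y\<in>SR. MMD V E x y \<longleftrightarrow> target_E a b (f x) (f y))"
    using assms(2) unfolding graph_iso_def SR_def T_def SR_edge_def .
  then obtain f where bij: "bij_betw f SR T" and fE: "\<forall>x\<in>SR. \<forall>y\<in>SR. MMD V E x y \<longleftrightarrow> target_E a b (f x) (f y)"
    by (elim exE conjE)
  define g where "g = inv_into SR f"
  have gT: "g z \<in> SR" "f (g z) = z" if "z \<in> T" for z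
    using that bij unfolding g_def
    by (auto simp: bij_betw_def inv_into_into f_inv_into_f)
  have gf: "g (f x) = x" if "x \<in> SR" for x
    using that bij unfolding g_def by (simp add: bij_betw_inv_into_left)
  have fT: "f x \<in> T" if "x \<in> SR" for x using that bij unfolding bij_betw_def by auto
  have ginj: "z1 = z2" if "z1 \<in> T" "z2 \<in> T" "g z1 = g z2" for z1 z2
    using gT that by metis
  have SRV: "SR \<subseteq> V" unfolding SR_def SR_verts_def MMD_def by auto
  have MMD_SR: "x \<in> SR \<and> y \<in> SR" if "MMD V E x y" for x y
    using that unfolding SR_def SR_verts_def MMD_def by blast
  have Tforms: "z = Inl () \<or> (\<exists>i j. i < a \<and> z = Inr (Inl (i, j))) \<or> (\<exists>k. k < b \<and> z = Inr (Inr k))"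
    if "z \<in> T" for z
    using that unfolding T_def target_V_def aK2_bK1_V_def dunion_V_def by auto
  have Tc: "Inl () \<in> T" unfolding T_def target_V_def dunion_V_def by auto
  have Tp: "Inr (Inl (i, j)) \<in> T" if "i < a" for i j
    using that unfolding T_def target_V_def aK2_bK1_V_def dunion_V_def by auto
  have Tq: "Inr (Inr k) \<in> T" if "k < b" for k
    using that unfolding T_def target_V_def aK2_bK1_V_def dunion_V_def by auto
  define c where "c = g (Inl ())"
  define p where "p i j = g (Inr (Inl (i, j)))" for i j
  have cSR: "c \<in> SR" using gT Tc unfolding c_def by blast
  have cV: "c \<in> V" using cSR SRV by blast
  have pV: "p i j \<in> V" if "i < a" for i j using gT Tp that SRV unfolding p_def by blast
  have pinj: "i = i' \<and> j = j'" if "i < a" "i' < a" "p i j = p i' j'" for i i' j j'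
  proof -
    have "Inr (Inl (i, j)) = (Inr (Inl (i', j')) :: unit + ((nat \<times> bool) + nat))"
      using ginj[OF Tp[OF that(1)] Tp[OF that(2)]] that(3) unfolding p_def by blast
    then show ?thesis by simp
  qed
  have pc: "p i j \<noteq> c" if "i < a" for i j
    using ginj[OF Tp[OF that] Tc] that unfolding p_def c_def by auto
  have cover: "x \<in> M \<or> y \<in> M" if cM: "c \<in> M" and pM: "\<forall>i<a. p i True \<in> M \<or> p i False \<in> M"
    and m: "MMD V E x y" for M x y
  proof -
    have xy: "x \<in> SR" "y \<in> SR" using MMD_SR m by auto
    have te: "target_E a b (f x) (f y)" using fE xy m by blast
    have ex: "x = g (f x)" "y = g (f y)" using gf xy by auto
    consider (c1) "f x = Inl ()" | (c2) "f y = Inl ()"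
      | (c3) i j j' where "i < a" "f x = Inr (Inl (i, j))" "f y = Inr (Inl (i, j'))" "j \<noteq> j'"
    proof -
      have A: "f x = Inl () \<or> (\<exists>i j. i < a \<and> f x = Inr (Inl (i, j))) \<or> (\<exists>k. k < b \<and> f x = Inr (Inr k))"
        using Tforms fT xy by blast
      have B: "f y = Inl () \<or> (\<exists>i j. i < a \<and> f y = Inr (Inl (i, j))) \<or> (\<exists>k. k < b \<and> f y = Inr (Inr k))"
        using Tforms fT xy by blast
      show ?thesis using A B te that unfolding target_E_def aK2_bK1_E_def by auto
    qed
    then show ?thesis
    proof cases
      case c1 then show ?thesis using ex cM unfolding c_def by metis
    next
      case c2 then show ?thesis using ex cM unfolding c_def by metis
    next
      case (c3 i j j')
      have "x = p i j" "y = p i j'" using ex c3 unfolding p_def by metis+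
      then show ?thesis using pM c3 by (cases j; cases j') auto
    qed
  qed
  have Mwin: "maker_wins_M_game V E"
  proof -
    have "card V \<noteq> 0" using cV fin by auto
    then obtain n where n: "card V = Suc n" using not0_implies_Suc by blast
    have cn: "card (V - ({c} \<union> {})) = n" using n cV fin by simp
    have final: "\<exists>S\<subseteq>M. strong_resolving_set V E S"
      if "M \<subseteq> V" "c \<in> M" "\<forall>i<a. p i True \<in> M \<or> p i False \<in> M" for M
    proof -
      have "\<forall>u v. MMD V E u v \<longrightarrow> u \<in> M \<or> v \<in> M"
        using cover[OF that(2) that(3)] by blast
      then have "strong_resolving_set V E M" using cover_srs[OF conn that(1)] by blast
      then show ?thesis by blast
    qed
    have xV: "\<forall>i<a. p i True \<in> V \<and> p i False \<in> V" using pV by blast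
    have xy: "\<forall>i<a. p i True \<noteq> p i False"
      using pinj by blast
    have disj: "\<forall>i<a. \<forall>j<a. i \<noteq> j \<longrightarrow> p i True \<noteq> p j True \<and> p i True \<noteq> p j False \<and> p i False \<noteq> p j True \<and> p i False \<noteq> p j False"
      using pinj by blast
    have inv: "Inv a (\<lambda>i. p i True) (\<lambda>i. p i False) {c} {}"
      unfolding Inv_def using pc by blast
    have sub: "{c} \<union> {} \<subseteq> V" using cV by blast
    have "maker_wins V E n {c} {} False"
      by (rule pair_strategy[of V c a "\<lambda>i. p i True" "\<lambda>i. p i False" E, OF fin final xV xy disj cn sub _ inv]) auto
    then have "maker_wins V E (Suc n) {} {} True" using cV by auto
    then show ?thesis unfolding maker_wins_M_game_def using n by simp
  qed
  have qinj: "k = k'" if "k < b" "k' < b" "g (Inr (Inr k)) = g (Inr (Inr k'))" for k k'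
  proof -
    have "Inr (Inr k) = (Inr (Inr k') :: unit + ((nat \<times> bool) + nat))"
      using ginj[OF Tq[OF that(1)] Tq[OF that(2)]] that(3) by blast
    then show ?thesis by simp
  qed
  have qc: "g (Inr (Inr k)) \<noteq> c" if "k < b" for k
  proof
    assume "g (Inr (Inr k)) = c"
    then have "Inr (Inr k) = (Inl () :: unit + ((nat \<times> bool) + nat))"
      using ginj[OF Tq[OF that] Tc] unfolding c_def by blast
    then show False by simp
  qed
  have fInr: "f (g (Inr s)) \<in> Inr ` aK2_bK1_V a b" if "Inr s \<in> T" for s
  proof -
    have "f (g (Inr s)) = Inr s" using gT that by blast
    moreover have "s \<in> aK2_bK1_V a b" using that unfolding T_def target_V_def dunion_V_def by auto
    ultimately show ?thesis by blast
  qed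
  obtain w1 w2 where w: "w1 \<in> SR" "w2 \<in> SR" "w1 \<noteq> w2" "w1 \<noteq> c" "w2 \<noteq> c"
    "f w1 \<in> Inr ` aK2_bK1_V a b" "f w2 \<in> Inr ` aK2_bK1_V a b"
  proof (cases "a \<ge> 1")
    case True
    then have a0: "0 < a" by simp
    have 1: "p 0 True \<noteq> p 0 False" using pinj[OF a0 a0] by blast
    have 2: "p 0 True \<noteq> c" "p 0 False \<noteq> c" using pc[OF a0] by auto
    have 3: "p 0 True \<in> SR" "p 0 False \<in> SR" using gT Tp[OF a0] unfolding p_def by auto
    have 4: "f (p 0 True) \<in> Inr ` aK2_bK1_V a b" "f (p 0 False) \<in> Inr ` aK2_bK1_V a b"
      using fInr Tp[OF a0] unfolding p_def by auto
    show ?thesis by (rule that[OF 3 1 2 4])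
  next
    case False
    then have b2: "0 < b" "1 < b" using assms(3) by auto
    have 1: "g (Inr (Inr 0)) \<noteq> g (Inr (Inr 1))" using qinj[OF b2] by auto
    have 2: "g (Inr (Inr 0)) \<noteq> c" "g (Inr (Inr 1)) \<noteq> c" using qc b2 by auto
    have 3: "g (Inr (Inr 0)) \<in> SR" "g (Inr (Inr 1)) \<in> SR" using gT Tq b2 by auto
    have 4: "f (g (Inr (Inr 0))) \<in> Inr ` aK2_bK1_V a b" "f (g (Inr (Inr 1))) \<in> Inr ` aK2_bK1_V a b"
      using fInr Tq b2 by auto
    show ?thesis by (rule that[OF 3 1 2 4])
  qed
  have mmd: "MMD V E c w" if "w \<in> SR" "f w \<in> Inr ` aK2_bK1_V a b" for w
  proof -
    have "f c = Inl ()" using gT Tc unfolding c_def by blast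
    then have "target_E a b (f c) (f w)" using that unfolding target_E_def by auto
    then show ?thesis using fE cSR that by blast
  qed
  have blk: "\<forall>S. strong_resolving_set V E S \<longrightarrow> c \<in> S \<or> w \<in> S" if "w \<in> SR" "f w \<in> Inr ` aK2_bK1_V a b" for w
    using srs_cover[OF conn] mmd[OF that] by blast
  have Bl: "\<not> maker_wins_B_game V E"
  proof -
    have "card V \<noteq> 0" using cV fin by auto
    then obtain n where n: "card V = Suc n" using not0_implies_Suc by blast
    have cn: "card (V - ({} \<union> {c})) = n" using n cV fin by simp
    have w1V: "w1 \<in> V - ({} \<union> {c})" using w SRV by auto
    have "n \<noteq> 0" using cn w1V fin by (metis card_0_eq empty_iff finite_Diff)
    then obtain m where m: "n = Suc m" by (cases n) auto
    have "\<not> maker_wins V E m {u} {c} False" if u: "u \<in> V - ({} \<union> {c})" for u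
    proof -
      obtain w where ww: "w \<in> SR" "f w \<in> Inr ` aK2_bK1_V a b" "w \<noteq> u" "w \<noteq> c"
        using w by metis
      have cm: "card (V - ({u} \<union> {c})) = m" using card_step(1)[OF fin u] cn m by simp
      have wf: "w \<in> V - ({u} \<union> {c})" using ww SRV by auto
      have "m \<noteq> 0" using cm wf fin by (metis card_0_eq empty_iff finite_Diff)
      then obtain k where k: "m = Suc k" by (cases m) auto
      have ck: "card (V - ({u} \<union> insert w {c})) = k" using card_step(2)[OF fin wf] cm k by simp
      have "\<not> maker_wins V E k {u} (insert w {c}) True"
        using breaker_blocks[OF fin blk[OF ww(1,2)] ck] ww u by auto
      then show ?thesis using k wf by auto
    qed
    then have "\<not> maker_wins V E n {} {c} True" using m by auto
    then show ?thesis unfolding maker_wins_B_game_def using n cV by auto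
  qed
  show ?thesis unfolding O_SR_def breaker_wins_M_game_def breaker_wins_B_game_def
    using Mwin Bl by simp
qed

end
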